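(* Let $N\in\mathbb{N}\setminus\{1\}$. (i) For $k\in\mathbb{Z}_+$ and $s\in\mathbb{R}$, $$\gamma_N^{s,k}=k!\sum_{l=0}^{\lfloor k/2\rfloor}\frac{(k-2l)!}{(2l)!}\Bigl(\sum_{n=\lceil k/2\rceil}^{k-l}2^{2n-k}\binom{s/2}{n}\binom{n}{k-n}\binom{k-n}{l}\Bigr)^2\gamma_{N-1}^{2l,2l}.$$ In particular, for $m\in\mathbb{Z}_+$, $$\gamma_N^{2m,2m}=(2m)!\sum_{l=0}^m\frac{(2(m-l))!}{(2l)!}\binom{m}{l}^2\gamma_{N-1}^{2l,2l}.$$ (ii) For $k\in\mathbb{N}$, $$\ell_N^k=k!\sum_{l=0}^{\lfloor k/2\rfloor}\frac{(k-2l)!}{(2l)!}\Bigl(\sum_{n=\lceil k/2\rceil}^{k-l}2^{2n-k}\frac{(-1)^n}{2n}\binom{n}{k-n}\binom{k-n}{l}\Bigr)^2\gamma_{N-1}^{2l,2l}.$$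
   Context: For $M\in\mathbb{N}$: $|x|_M$ is the Euclidean norm on $\mathbb{R}^M$, $I_M=\{1,\ldots,M\}$, $D_i=\partial_{x_{i_1}}\cdots\partial_{x_{i_k}}$ for $i\in I_M^k$, $|\nabla_M^k u(x)|_{M^k}=\bigl(\sum_{i\in I_M^k}(D_iu(x))^2\bigr)^{1/2}$ (for $k=0$ this is $|u(x)|$). For $k\in\mathbb{Z}_+$, $s\in\mathbb{R}$, $\gamma_M^{s,k}$ denotes the constant value of $(|x|_M^{k-s}|\nabla_M^k[|x|_M^s]|_{M^k})^2$ on $\mathbb{R}^M\setminus\{0\}$ (it is known to be constant), and for $k\in\mathbb{N}$, $\ell_M^k$ denotes the constant value of $(|x|_M^{k}|\nabla_M^k[\log|x|_M]|_{M^k})^2$ on $\mathbb{R}^M\setminus\{0\}$. $\binom{\nu}{k}=(\nu)_k/k!$ with $(\nu)_k=\prod_{j=0}^{k-1}(\nu-j)$, $(\nu)_0=1$. *)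

theory Defs
  imports "HOL-Analysis.Analysis"
begin

text \<open>Points of R^M are represented as functions nat => real; only the coordinates
  0..M-1 are used (index i here corresponds to index i+1 in the paper).\<close>

definition enorm :: "nat \<Rightarrow> (nat \<Rightarrow> real) \<Rightarrow> real" where
  "enorm M x = sqrt (\<Sum>i<M. (x i)\<^sup>2)"

definition pdiff :: "nat \<Rightarrow> ((nat \<Rightarrow> real) \<Rightarrow> real) \<Rightarrow> (nat \<Rightarrow> real) \<Rightarrow> real" where
  "pdiff i u = (\<lambda>x. deriv (\<lambda>t. u (x(i := x i + t))) 0)"

fun iter_pdiff :: "nat list \<Rightarrow> ((nat \<Rightarrow> real) \<Rightarrow> real) \<Rightarrow> (nat \<Rightarrow> real) \<Rightarrow> real" where
  "iter_pdiff [] u = u"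
| "iter_pdiff (i # is) u = pdiff i (iter_pdiff is u)"

definition multi_idx :: "nat \<Rightarrow> nat \<Rightarrow> nat list set" where
  "multi_idx M k = {is. length is = k \<and> set is \<subseteq> {..<M}}"

definition grad_norm :: "nat \<Rightarrow> nat \<Rightarrow> ((nat \<Rightarrow> real) \<Rightarrow> real) \<Rightarrow> (nat \<Rightarrow> real) \<Rightarrow> real" where
  "grad_norm M k u x = sqrt (\<Sum>is\<in>multi_idx M k. (iter_pdiff is u x)\<^sup>2)"

definition e1 :: "nat \<Rightarrow> real" where
  "e1 = (\<lambda>i. if i = 0 then 1 else 0)"

text \<open>gamma_M^{s,k}: the (known to be constant) value of
  (|x|^{k-s} |nabla^k |x|^s|)^2 on R^M \ {0}, evaluated at x = e1.\<close>
definition gamma :: "nat \<Rightarrow> real \<Rightarrow> nat \<Rightarrow> real" where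
  "gamma M s k = (enorm M e1 powr (real k - s) * grad_norm M k (\<lambda>x. enorm M x powr s) e1)\<^sup>2"

text \<open>ell_M^k: the constant value of (|x|^k |nabla^k log|x||)^2, evaluated at e1.\<close>
definition ell :: "nat \<Rightarrow> nat \<Rightarrow> real" where
  "ell M k = (enorm M e1 ^ k * grad_norm M k (\<lambda>x. ln (enorm M x)) e1)\<^sup>2"

end

theory Submission
  imports Defs
begin


type_synonym trm = "real \<times> nat list \<times> nat \<times> nat"

fun dels :: "nat \<Rightarrow> nat list \<Rightarrow> nat list list" where
  "dels j [] = []"
| "dels j (i # U) = (if i = j then [U] else []) @ map ((#) i) (dels j U)"

fun dterm :: "nat \<Rightarrow> trm \<Rightarrow> trm list" where
  "dterm j (w, U, p, c) = (if j = 0 then [(w, U, Suc p, c)]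
     else (2 * w, j # U, p, Suc c) # map (\<lambda>V. (w, V, p, c)) (dels j U))"

fun S :: "nat list \<Rightarrow> trm list" where
  "S [] = [(1, [], 0, 0)]"
| "S (j # is) = concat (map (dterm j) (S is))"

definition rho :: "nat \<Rightarrow> (nat \<Rightarrow> real) \<Rightarrow> real" where
  "rho N x = (\<Sum>i\<in>{1..<N}. (x i)\<^sup>2)"

fun val :: "nat \<Rightarrow> (nat \<Rightarrow> nat \<Rightarrow> real \<Rightarrow> real \<Rightarrow> real) \<Rightarrow> trm \<Rightarrow> (nat \<Rightarrow> real) \<Rightarrow> real" where
  "val N H (w, U, p, c) x = w * prod_list (map x U) * H p c (x 0) (rho N x)"

lemma deriv_prod_list:
  "((\<lambda>t. prod_list (map (x(j := x j + t)) U)) has_real_derivative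
     sum_list (map (\<lambda>V. prod_list (map x V)) (dels j U))) (at 0)"
proof (induction U)
  case Nil
  then show ?case by simp
next
  case (Cons i U)
  have d1: "((\<lambda>t. (x(j := x j + t)) i) has_real_derivative (if i = j then 1 else 0)) (at 0)"
    by (cases "i = j") (auto intro!: derivative_eq_intros)
  have "((\<lambda>t. (x(j := x j + t)) i * prod_list (map (x(j := x j + t)) U)) has_real_derivative
      (if i = j then 1 else 0) * prod_list (map (x(j := x j + 0)) U) + (\<Sum>V\<leftarrow>dels j U. prod_list (map x V)) * (x(j := x j + 0)) i) (at 0)"
    by (rule DERIV_mult[OF d1 Cons.IH])
  then show ?case
    by (cases "i = j") (simp_all add: sum_list_const_mult[symmetric] o_def mult.commute del: fun_upd_apply)
qed

lemma rho_upd_other: "j \<notin> {1..<N} \<Longrightarrow> rho N (x(j := v)) = rho N x"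
  unfolding rho_def by (rule sum.cong) auto

lemma rho_upd: "j \<in> {1..<N} \<Longrightarrow> rho N (x(j := v)) = rho N x - (x j)\<^sup>2 + v\<^sup>2"
proof -
  assume j: "j \<in> {1..<N}"
  have "rho N (x(j := v)) = v\<^sup>2 + (\<Sum>i\<in>{1..<N}-{j}. (x i)\<^sup>2)"
    unfolding rho_def using j by (subst sum.remove[of _ j]) (auto intro!: sum.cong)
  moreover have "rho N x = (x j)\<^sup>2 + (\<Sum>i\<in>{1..<N}-{j}. (x i)\<^sup>2)"
    unfolding rho_def using j by (subst sum.remove[of _ j]) auto
  ultimately show ?thesis by simp
qed

lemma prod_list_upd_notin: "j \<notin> set U \<Longrightarrow> prod_list (map (x(j := v)) U) = prod_list (map x U)"
  by (induction U) auto

lemma deriv_val: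
  assumes j: "j < N" and U0: "0 \<notin> set U"
    and hr: "(H p c (x 0) has_real_derivative H p (Suc c) (x 0) (rho N x)) (at (rho N x))"
    and ha: "((\<lambda>a. H p c a (rho N x)) has_real_derivative H (Suc p) c (x 0) (rho N x)) (at (x 0))"
  shows "((\<lambda>t. val N H (w,U,p,c) (x(j := x j + t))) has_real_derivative
           sum_list (map (\<lambda>t'. val N H t' x) (dterm j (w,U,p,c)))) (at 0)"
proof (cases "j = 0")
  case True
  have e: "(\<lambda>t. val N H (w,U,p,c) (x(j := x j + t))) = (\<lambda>t. w * prod_list (map x U) * H p c (t + x 0) (rho N x))"
    apply (rule ext) using True U0 by (simp add: prod_list_upd_notin rho_upd_other add.commute fun_upd_same del: fun_upd_apply)
  have "((\<lambda>t. H p c (t + x 0) (rho N x)) has_real_derivative H (Suc p) c (x 0) (rho N x)) (at 0)"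
    using ha DERIV_shift[of "\<lambda>a. H p c a (rho N x)" _ 0 "x 0"] by simp
  then have "((\<lambda>t. w * prod_list (map x U) * H p c (t + x 0) (rho N x)) has_real_derivative
     w * prod_list (map x U) * H (Suc p) c (x 0) (rho N x)) (at 0)"
    by (rule DERIV_cmult)
  then show ?thesis using True unfolding e by simp
next
  case False
  then have jN: "j \<in> {1..<N}" using j by auto
  have r: "rho N (x(j := x j + t)) = rho N x + 2 * x j * t + t\<^sup>2" for t
    using jN by (simp add: rho_upd power2_eq_square algebra_simps)
  have x0: "(x(j := x j + t)) 0 = x 0" for t using False by simp
  have g: "((\<lambda>t. rho N x + 2 * x j * t + t\<^sup>2) has_real_derivative 2 * x j) (at 0)"
    by (auto intro!: derivative_eq_intros)
  have h: "((\<lambda>t. H p c (x 0) (rho N x + 2 * x j * t + t\<^sup>2)) has_real_derivative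
      H p (Suc c) (x 0) (rho N x) * (2 * x j)) (at 0)"
    using DERIV_chain2[where f="H p c (x 0)" and g="\<lambda>t. rho N x + 2 * x j * t + t\<^sup>2" and x=0, OF _ g] hr by simp
  have P: "((\<lambda>t. prod_list (map (x(j := x j + t)) U)) has_real_derivative
     sum_list (map (\<lambda>V. prod_list (map x V)) (dels j U))) (at 0)"
    by (rule deriv_prod_list)
  have "((\<lambda>t. w * (prod_list (map (x(j := x j + t)) U) * H p c (x 0) (rho N x + 2 * x j * t + t\<^sup>2)))
     has_real_derivative w * (sum_list (map (\<lambda>V. prod_list (map x V)) (dels j U)) * H p c (x 0) (rho N x + 2 * x j * 0 + 0\<^sup>2)
       + H p (Suc c) (x 0) (rho N x) * (2 * x j) * prod_list (map (x(j := x j + 0)) U))) (at 0)"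
    by (rule DERIV_cmult[OF DERIV_mult[OF P h]])
  moreover have e: "(\<lambda>t. val N H (w,U,p,c) (x(j := x j + t))) = (\<lambda>t. w * (prod_list (map (x(j := x j + t)) U) * H p c (x 0) (rho N x + 2 * x j * t + t\<^sup>2)))"
    by (rule ext) (simp only: val.simps r x0 mult.assoc)
  ultimately show ?thesis using False unfolding e
    by (simp add: sum_list_const_mult[symmetric] sum_list_mult_const[symmetric] o_def algebra_simps del: fun_upd_apply)
qed

lemma dels_subset: "V \<in> set (dels j U) \<Longrightarrow> set V \<subseteq> set U"
  by (induction U arbitrary: V) (auto split: if_splits, blast)

lemma S_U0: "(w, U, p, c) \<in> set (S is) \<Longrightarrow> 0 \<notin> set U"
proof (induction "is" arbitrary: w U p c)
  case Nil then show ?case by simp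
next
  case (Cons j "is")
  then obtain w' U' p' c' where t: "(w',U',p',c') \<in> set (S is)" "(w,U,p,c) \<in> set (dterm j (w',U',p',c'))"
    by auto
  from Cons.IH[OF t(1)] t(2) show ?case
    by (auto split: if_splits dest: dels_subset)
qed

lemma sum_list_map_concat: "sum_list (map f (concat xs)) = sum_list (map (\<lambda>x. sum_list (map f x)) xs)"
  by (induction xs) auto

lemma DERIV_sum_list:
  "(\<And>t. t \<in> set L \<Longrightarrow> ((\<lambda>s. f t s) has_real_derivative f' t) (at 0)) \<Longrightarrow>
   ((\<lambda>s. sum_list (map (\<lambda>t. f t s) L)) has_real_derivative sum_list (map f' L)) (at 0)"
  by (induction L) (auto intro!: derivative_eq_intros)

lemma iter_pdiff_S:
  assumes dom: "\<And>x j. x \<in> Dom \<Longrightarrow> j < N \<Longrightarrow> eventually (\<lambda>t. x(j := x j + t) \<in> Dom) (nhds 0)"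
    and hr: "\<And>x p c. x \<in> Dom \<Longrightarrow> (H p c (x 0) has_real_derivative H p (Suc c) (x 0) (rho N x)) (at (rho N x))"
    and ha: "\<And>x p c. x \<in> Dom \<Longrightarrow> ((\<lambda>a. H p c a (rho N x)) has_real_derivative H (Suc p) c (x 0) (rho N x)) (at (x 0))"
    and base: "\<And>x. x \<in> Dom \<Longrightarrow> u x = H 0 0 (x 0) (rho N x)"
  shows "set is \<subseteq> {..<N} \<Longrightarrow> x \<in> Dom \<Longrightarrow> iter_pdiff is u x = sum_list (map (\<lambda>t. val N H t x) (S is))"
proof (induction "is" arbitrary: x)
  case Nil
  then show ?case by (simp add: base)
next
  case (Cons j "is")
  have jN: "j < N" and isN: "set is \<subseteq> {..<N}" using Cons.prems by auto
  have D: "((\<lambda>s. sum_list (map (\<lambda>t. val N H t (x(j := x j + s))) (S is))) has_real_derivative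
      sum_list (map (\<lambda>t0. sum_list (map (\<lambda>t'. val N H t' x) (dterm j t0))) (S is))) (at 0)"
  proof (rule DERIV_sum_list)
    fix t0 assume t0: "t0 \<in> set (S is)"
    obtain w U p c where tt: "t0 = (w,U,p,c)" by (cases t0) auto
    show "((\<lambda>s. val N H t0 (x(j := x j + s))) has_real_derivative
        sum_list (map (\<lambda>t'. val N H t' x) (dterm j t0))) (at 0)"
      unfolding tt
      by (rule deriv_val[where H=H and p=p and c=c and x=x, OF jN S_U0[OF t0[unfolded tt]] hr[OF Cons.prems(2)] ha[OF Cons.prems(2)]])
  qed
  have ev: "eventually (\<lambda>s. iter_pdiff is u (x(j := x j + s)) = sum_list (map (\<lambda>t. val N H t (x(j := x j + s))) (S is))) (nhds 0)"
    using dom[OF Cons.prems(2) jN] by eventually_elim (rule Cons.IH[OF isN])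
  have "((\<lambda>s. iter_pdiff is u (x(j := x j + s))) has_real_derivative
      sum_list (map (\<lambda>t0. sum_list (map (\<lambda>t'. val N H t' x) (dterm j t0))) (S is))) (at 0)"
    using DERIV_cong_ev[OF refl ev refl] D by simp
  then have "iter_pdiff (j # is) u x = sum_list (map (\<lambda>t0. sum_list (map (\<lambda>t'. val N H t' x) (dterm j t0))) (S is))"
    by (simp add: pdiff_def DERIV_imp_deriv)
  also have "\<dots> = sum_list (map (\<lambda>t. val N H t x) (S (j # is)))"
    by (simp add: sum_list_map_concat o_def)
  finally show ?case .
qed

fun addp :: "nat \<Rightarrow> trm \<Rightarrow> trm" where
  "addp n (w, U, p, c) = (w, U, p + n, c)"

lemma dterm_addp: "j \<noteq> 0 \<Longrightarrow> dterm j (addp n t) = map (addp n) (dterm j t)"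
  by (cases t) auto

lemma S_sep: "S is = map (addp (count_list is 0)) (S (filter (\<lambda>i. i \<noteq> 0) is))"
proof (induction "is")
  case Nil
  then show ?case by simp
next
  case (Cons j "is")
  show ?case
  proof (cases "j = 0")
    case True
    have "S (j # is) = map (addp 1) (S is)"
    proof -
      have "concat (map (dterm 0) L) = map (addp 1) L" for L
        by (induction L) (auto simp: split_def)
      then show ?thesis using True by simp
    qed
    have aa: "addp (Suc 0) (addp n t) = addp (Suc n) t" for n t by (cases t) auto
    show ?thesis using True Cons.IH \<open>S (j # is) = map (addp 1) (S is)\<close> by (simp add: o_def aa)
  next
    case False
    have "S (j # is) = concat (map (dterm j) (map (addp (count_list is 0)) (S (filter (\<lambda>i. i \<noteq> 0) is))))"
      using Cons.IH by simp
    also have "\<dots> = map (addp (count_list is 0)) (S (filter (\<lambda>i. i \<noteq> 0) (j # is)))"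
      using False by (simp add: o_def dterm_addp map_concat)
    finally show ?thesis using False by simp
  qed
qed

lemma dels_length: "V \<in> set (dels j U) \<Longrightarrow> Suc (length V) = length U"
  by (induction U arbitrary: V) (auto split: if_splits)

lemma S_inv: "0 \<notin> set is \<Longrightarrow> (w, U, p, c) \<in> set (S is) \<Longrightarrow> p = 0 \<and> 2 * c = length is + length U"
proof (induction "is" arbitrary: w U p c)
  case Nil then show ?case by simp
next
  case (Cons j "is")
  then obtain w' U' p' c' where t: "(w',U',p',c') \<in> set (S is)" "(w,U,p,c) \<in> set (dterm j (w',U',p',c'))"
    by auto
  have j0: "j \<noteq> 0" using Cons.prems by auto
  from Cons.IH[OF _ t(1)] Cons.prems(1) have "p' = 0 \<and> 2 * c' = length is + length U'" by auto
  with t(2) j0 show ?case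
    by (auto dest: dels_length)
qed

definition W :: "nat list \<Rightarrow> real" where
  "W is = sum_list (map (\<lambda>t. if fst (snd t) = [] then fst t else 0) (S is))"

lemma prod_e1: "0 \<notin> set U \<Longrightarrow> prod_list (map e1 U) = (if U = [] then 1 else 0)"
  by (induction U) (auto simp: e1_def)

lemma rho_e1: "rho N e1 = 0"
  by (simp add: rho_def e1_def)

lemma sum_val_e1:
  "sum_list (map (\<lambda>t. val N H t e1) (S is)) =
     W (filter (\<lambda>i. i \<noteq> 0) is) * H (count_list is 0) (length (filter (\<lambda>i. i \<noteq> 0) is) div 2) 1 0"
proof -
  let ?is = "filter (\<lambda>i. i \<noteq> 0) is" and ?z = "count_list is 0"
  have "sum_list (map (\<lambda>t. val N H t e1) (S is)) = sum_list (map (\<lambda>t. val N H (addp ?z t) e1) (S ?is))"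
    by (subst S_sep) (simp add: o_def)
  also have "\<dots> = sum_list (map (\<lambda>t. (if fst (snd t) = [] then fst t else 0) * H ?z (length ?is div 2) 1 0) (S ?is))"
  proof (rule arg_cong[where f=sum_list], rule map_cong[OF refl])
    fix t assume t: "t \<in> set (S ?is)"
    obtain w U p c where tt: "t = (w,U,p,c)" by (cases t) auto
    have U0: "0 \<notin> set U" using S_U0 t tt by blast
    have inv: "p = 0 \<and> 2 * c = length ?is + length U" using S_inv[of ?is w U p c] t tt by auto
    have cc: "U = [] \<Longrightarrow> c = length ?is div 2" using inv by auto
    show "val N H (addp ?z t) e1 = (if fst (snd t) = [] then fst t else 0) * H ?z (length ?is div 2) 1 0"
      using U0 inv cc by (auto simp: tt prod_e1 rho_e1) (simp add: e1_def)
  qed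
  also have "\<dots> = W ?is * H ?z (length ?is div 2) 1 0"
    by (simp add: W_def sum_list_mult_const o_def)
  finally show ?thesis .
qed

definition Hpoly :: "nat \<Rightarrow> nat \<Rightarrow> nat \<Rightarrow> real \<Rightarrow> real \<Rightarrow> real" where
  "Hpoly l p c a r = (if p = 0 \<and> c \<le> l then fact l / fact (l - c) * r ^ (l - c) else 0)"

lemma sum_val_poly:
  assumes "0 \<notin> set is" "length is = 2 * l" "y 0 = 0" "rho N y = 1"
  shows "sum_list (map (\<lambda>t. val N (Hpoly l) t y) (S is)) = W is * fact l"
proof -
  have "sum_list (map (\<lambda>t. val N (Hpoly l) t y) (S is)) =
     sum_list (map (\<lambda>t. (if fst (snd t) = [] then fst t else 0) * fact l) (S is))"
  proof (rule arg_cong[where f=sum_list], rule map_cong[OF refl])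
    fix t assume t: "t \<in> set (S is)"
    obtain w U p c where tt: "t = (w,U,p,c)" by (cases t) auto
    have inv: "p = 0 \<and> 2 * c = length is + length U" using S_inv[of "is" w U p c] t tt assms(1) by auto
    show "val N (Hpoly l) t y = (if fst (snd t) = [] then fst t else 0) * fact l"
      using inv assms by (cases U) (auto simp: tt Hpoly_def)
  qed
  also have "\<dots> = W is * fact l"
    by (simp add: W_def sum_list_mult_const o_def)
  finally show ?thesis .
qed



fun Hg :: "(nat \<Rightarrow> real \<Rightarrow> real) \<Rightarrow> nat \<Rightarrow> nat \<Rightarrow> real \<Rightarrow> real \<Rightarrow> real" where
  "Hg gd 0 c a r = gd c (a\<^sup>2 + r)"
| "Hg gd (Suc 0) c a r = 2 * a * gd (Suc c) (a\<^sup>2 + r)"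
| "Hg gd (Suc (Suc p)) c a r = 2 * a * Hg gd (Suc p) (Suc c) a r + 2 * (real p + 1) * Hg gd p (Suc c) a r"

locale gdfam =
  fixes gd :: "nat \<Rightarrow> real \<Rightarrow> real"
  assumes gdd: "\<And>n t. 0 < t \<Longrightarrow> (gd n has_real_derivative gd (Suc n) t) (at t)"
begin

lemma gd_chain: "(f has_real_derivative f') (at x) \<Longrightarrow> 0 < f x \<Longrightarrow>
   ((\<lambda>x. gd n (f x)) has_real_derivative gd (Suc n) (f x) * f') (at x)"
  by (rule DERIV_chain2[OF gdd])

lemma Hg_dr: "0 < a\<^sup>2 + r \<Longrightarrow> (Hg gd p c a has_real_derivative Hg gd p (Suc c) a r) (at r)"
proof (induction p arbitrary: c rule: less_induct)
  case (less p)
  show ?case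
  proof (cases p)
    case 0
    have "((\<lambda>r. gd c (a\<^sup>2 + r)) has_real_derivative gd (Suc c) (a\<^sup>2 + r) * 1) (at r)"
      by (rule gd_chain) (auto intro!: derivative_eq_intros simp: less.prems)
    then show ?thesis using 0 by simp
  next
    case (Suc p')
    show ?thesis
    proof (cases p')
      case 0
      have "((\<lambda>r. 2 * a * gd (Suc c) (a\<^sup>2 + r)) has_real_derivative 2 * a * (gd (Suc (Suc c)) (a\<^sup>2 + r) * 1)) (at r)"
        by (rule DERIV_cmult, rule gd_chain) (auto intro!: derivative_eq_intros simp: less.prems)
      then show ?thesis using Suc 0 by simp
    next
      case (Suc q)
      have d1: "(Hg gd (Suc q) (Suc c) a has_real_derivative Hg gd (Suc q) (Suc (Suc c)) a r) (at r)"
        using less.IH[of "Suc q"] less.prems \<open>p = Suc p'\<close> Suc by (simp del: Hg.simps)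
      have d2: "(Hg gd q (Suc c) a has_real_derivative Hg gd q (Suc (Suc c)) a r) (at r)"
        using less.IH[of q] less.prems \<open>p = Suc p'\<close> Suc by auto
      have "((\<lambda>r. 2 * a * Hg gd (Suc q) (Suc c) a r + 2 * (real q + 1) * Hg gd q (Suc c) a r) has_real_derivative
          2 * a * Hg gd (Suc q) (Suc (Suc c)) a r + 2 * (real q + 1) * Hg gd q (Suc (Suc c)) a r) (at r)"
        by (intro DERIV_add DERIV_cmult d1 d2)
      then show ?thesis using \<open>p = Suc p'\<close> Suc by simp
    qed
  qed
qed

lemma Hg_da: "0 < a\<^sup>2 + r \<Longrightarrow> ((\<lambda>a. Hg gd p c a r) has_real_derivative Hg gd (Suc p) c a r) (at a)"
proof (induction p arbitrary: c rule: less_induct)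
  case (less p)
  show ?case
  proof (cases p)
    case 0
    have "((\<lambda>a. gd c (a\<^sup>2 + r)) has_real_derivative gd (Suc c) (a\<^sup>2 + r) * (2 * a)) (at a)"
      by (rule gd_chain) (auto intro!: derivative_eq_intros simp: less.prems)
    then show ?thesis using 0 by (simp add: mult_ac)
  next
    case (Suc p')
    show ?thesis
    proof (cases p')
      case 0
      have "((\<lambda>a. 2 * a * gd (Suc c) (a\<^sup>2 + r)) has_real_derivative
            2 * gd (Suc c) (a\<^sup>2 + r) + (gd (Suc (Suc c)) (a\<^sup>2 + r) * (2 * a)) * (2 * a)) (at a)"
        by (rule DERIV_mult[where f="\<lambda>a. 2 * a", THEN DERIV_cong], auto intro!: derivative_eq_intros gd_chain simp: less.prems)
      then show ?thesis using Suc 0 by (simp add: algebra_simps)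
    next
      case (Suc q)
      have d1: "((\<lambda>a. Hg gd (Suc q) (Suc c) a r) has_real_derivative Hg gd (Suc (Suc q)) (Suc c) a r) (at a)"
        using less.IH[of "Suc q"] less.prems \<open>p = Suc p'\<close> Suc by (simp del: Hg.simps)
      have d2: "((\<lambda>a. Hg gd q (Suc c) a r) has_real_derivative Hg gd (Suc q) (Suc c) a r) (at a)"
        using less.IH[of q] less.prems \<open>p = Suc p'\<close> Suc by auto
      have "((\<lambda>a. 2 * a * Hg gd (Suc q) (Suc c) a r + 2 * (real q + 1) * Hg gd q (Suc c) a r) has_real_derivative
          (2 * Hg gd (Suc q) (Suc c) a r + Hg gd (Suc (Suc q)) (Suc c) a r * (2 * a)) + 2 * (real q + 1) * Hg gd (Suc q) (Suc c) a r) (at a)"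
      proof -
        have l: "((\<lambda>a. 2 * a) has_real_derivative 2) (at a)" by (auto intro!: derivative_eq_intros)
        show ?thesis by (intro DERIV_add DERIV_cmult d2 DERIV_mult[OF l d1])
      qed
      then show ?thesis using \<open>p = Suc p'\<close> Suc by (simp add: algebra_simps)
    qed
  qed
qed

end


definition Tco :: "(nat \<Rightarrow> real \<Rightarrow> real) \<Rightarrow> nat \<Rightarrow> nat \<Rightarrow> nat \<Rightarrow> real" where
  "Tco gd p c i = (if 2*i \<le> p then fact p / (fact i * fact (p - 2*i)) * 2^(p-2*i) * gd (c+p-i) 1 else 0)"

lemma coef_id0: "fact (2*j+2) / (fact (j+1) * fact 0) * (2::real)^0 = 2 * (real (2*j) + 1) * (fact (2*j) / (fact j * fact 0) * 2^0)"
proof -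
  have "fact (2*j+2) = (real (2*j) + 2) * ((real (2*j) + 1) * fact (2*j))"
    by (simp add: fact_Suc algebra_simps)
  moreover have "fact (j+1) = (real j + 1) * (fact j :: real)" by (simp add: fact_Suc)
  moreover have "(fact j :: real) > 0" by simp
  ultimately show ?thesis by (simp add: divide_simps) (simp add: algebra_simps)
qed

lemma coef_id1: "fact (Suc q + 2*j+2) / (fact (j+1) * fact (Suc q)) * (2::real)^(Suc q) =
   2 * (fact (Suc q + 2*j+1) / (fact (j+1) * fact q) * 2^q) + 2 * (real (Suc q + 2*j) + 1) * (fact (Suc q + 2*j) / (fact j * fact (Suc q)) * 2^(Suc q))"
proof -
  define m where "m = Suc q + 2*j"
  define K where "K = (real m + 1) * fact m * 2^q / (fact j * fact q)"
  have a: "fact (m+2) = (real m + 2) * ((real m + 1) * fact m)"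
    by (simp add: fact_Suc algebra_simps)
  have b: "fact (m+1) = (real m + 1) * (fact m :: real)" by (simp add: fact_Suc)
  have c: "fact (j+1) = (real j + 1) * (fact j :: real)" by (simp add: fact_Suc)
  have d: "fact (Suc q) = (real q + 1) * (fact q :: real)" by (simp add: fact_Suc)
  have e: "Suc q + 2*j+2 = m + 2" "Suc q + 2*j+1 = m+1" "Suc q + 2*j = m" by (auto simp: m_def)
  have pos: "(fact j :: real) > 0" "(fact q :: real) > 0" "real j + 1 > 0" "real q + 1 > 0" by auto
  have L: "fact (m+2) / (fact (j+1) * fact (Suc q)) * (2::real)^(Suc q) = K * (2 * (real m + 2) / ((real j + 1) * (real q + 1)))"
    unfolding a c d K_def using pos by (simp add: field_simps)
  have R1: "2 * (fact (m+1) / (fact (j+1) * fact q) * 2^q) = K * (2 / (real j + 1))"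
    unfolding b c K_def using pos by (simp add: field_simps)
  have R2: "2 * (real m + 1) * (fact m / (fact j * fact (Suc q)) * 2^(Suc q)) = K * (4 / (real q + 1))"
    unfolding d K_def using pos by (simp add: field_simps)
  have "2 * (real m + 2) / ((real j + 1) * (real q + 1)) = 2 / (real j + 1) + 4 / (real q + 1)"
    by (simp add: m_def field_simps)
  then show ?thesis unfolding e L R1 R2 by (simp add: distrib_left)
qed

lemma aux_div: "(a::real) / b = c * d / e \<Longrightarrow> a * g / b = c * (d * g) / e"
proof -
  assume h: "a / b = c * d / e"
  have "a * g / b = (a / b) * g" by simp
  also have "\<dots> = (c * d / e) * g" using h by simp
  also have "\<dots> = c * (d * g) / e" by simp
  finally show ?thesis .
qed

lemma Tco_step: "Tco gd (Suc (Suc p)) c (Suc j) = 2 * Tco gd (Suc p) (Suc c) (Suc j) + 2 * (real p + 1) * Tco gd p (Suc c) j"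
proof (cases "2*j \<le> p")
  case False
  then show ?thesis by (simp add: Tco_def)
next
  case True
  then obtain q where p: "p = q + 2*j" by (metis add.commute le_add_diff_inverse)
  show ?thesis
  proof (cases q)
    case 0
    have i1: "c + Suc (Suc (2*j)) - Suc j = c + j + 1" "Suc c + 2*j - j = c + j + 1" "Suc (Suc (2*j)) - 2 * Suc j = 0" by auto
    have "Tco gd (Suc (Suc p)) c (Suc j) = fact (2*j+2) / (fact (j+1) * fact 0) * (2::real)^0 * gd (c+j+1) 1"
      using p 0 by (simp add: Tco_def i1 add_ac del: fact_Suc)
    moreover have "Tco gd (Suc p) (Suc c) (Suc j) = 0" using p 0 by (simp add: Tco_def)
    moreover have "Tco gd p (Suc c) j = fact (2*j) / (fact j * fact 0) * 2^0 * gd (c+j+1) 1"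
      using p 0 by (simp add: Tco_def i1 add_ac del: fact_Suc)
    ultimately show ?thesis using p 0 coef_id0[of j] by (simp del: fact_Suc of_nat_mult add: mult.assoc aux_div)
  next
    case (Suc q')
    have i1: "c + Suc (Suc (Suc q' + 2*j)) - Suc j = c + Suc q' + j + 1"
       "Suc c + Suc (Suc q' + 2*j) - Suc j = c + Suc q' + j + 1"
       "Suc c + (Suc q' + 2*j) - j = c + Suc q' + j + 1"
       "Suc (Suc (Suc q' + 2*j)) - 2 * Suc j = Suc q'"
       "Suc (Suc q' + 2*j) - 2 * Suc j = q'"
       "Suc q' + 2*j - 2 * j = Suc q'" by auto
    define X :: real where "X = fact (Suc q' + 2*j+2) / (fact (j+1) * fact (Suc q')) * (2::real)^(Suc q')"
    define Y :: real where "Y = fact (Suc q' + 2*j+1) / (fact (j+1) * fact q') * 2^q'"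
    define Z :: real where "Z = fact (Suc q' + 2*j) / (fact j * fact (Suc q')) * 2^(Suc q')"
    define G where "G = gd (c + Suc q' + j + 1) 1"
    have T1: "Tco gd (Suc (Suc p)) c (Suc j) = X * G"
      unfolding X_def G_def using p Suc by (simp add: Tco_def i1 add_ac del: fact_Suc power_Suc)
    have T2: "Tco gd (Suc p) (Suc c) (Suc j) = Y * G"
      unfolding Y_def G_def using p Suc by (simp add: Tco_def i1 add_ac del: fact_Suc power_Suc)
    have T3: "Tco gd p (Suc c) j = Z * G"
      unfolding Z_def G_def using p Suc by (simp add: Tco_def i1 add_ac del: fact_Suc power_Suc)
    have XYZ: "X = 2 * Y + 2 * (real p + 1) * Z"
      unfolding X_def Y_def Z_def using coef_id1[of q' j] p Suc by simp
    show ?thesis unfolding T1 T2 T3 XYZ by (simp add: algebra_simps)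
  qed
qed

lemma Hg_explicit: "Hg gd p c 1 0 = (\<Sum>i\<le>p. Tco gd p c i)"
proof (induction p arbitrary: c rule: less_induct)
  case (less p)
  show ?case
  proof (cases p)
    case 0 then show ?thesis by (simp add: Tco_def)
  next
    case (Suc p')
    show ?thesis
    proof (cases p')
      case 0 then show ?thesis using Suc by (simp add: Tco_def)
    next
      case (Suc q)
      have pq: "p = Suc (Suc q)" using Suc \<open>p = Suc p'\<close> by simp
      have IH1: "Hg gd (Suc q) (Suc c) 1 0 = (\<Sum>i\<le>Suc q. Tco gd (Suc q) (Suc c) i)"
        using less.IH[of "Suc q"] pq by simp
      have IH2: "Hg gd q (Suc c) 1 0 = (\<Sum>i\<le>q. Tco gd q (Suc c) i)"
        using less.IH[of q] pq by simp
      have z0: "Tco gd (Suc (Suc q)) c 0 = 2 * Tco gd (Suc q) (Suc c) 0"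
        by (simp add: Tco_def)
      have zl: "Tco gd (Suc (Suc q)) c (Suc (Suc q)) = 0" by (simp add: Tco_def)
      have "(\<Sum>i\<le>Suc (Suc q). Tco gd (Suc (Suc q)) c i)
          = Tco gd (Suc (Suc q)) c 0 + (\<Sum>i\<le>q. Tco gd (Suc (Suc q)) c (Suc i))"
        by (subst sum.atMost_Suc_shift) (simp add: zl)
      also have "\<dots> = 2 * Tco gd (Suc q) (Suc c) 0 + (\<Sum>i\<le>q. 2 * Tco gd (Suc q) (Suc c) (Suc i) + 2 * (real q + 1) * Tco gd q (Suc c) i)"
        by (simp add: z0 Tco_step)
      also have "\<dots> = 2 * (\<Sum>i\<le>Suc q. Tco gd (Suc q) (Suc c) i) + 2 * (real q + 1) * (\<Sum>i\<le>q. Tco gd q (Suc c) i)"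
        by (simp add: sum.atMost_Suc_shift sum.distrib sum_distrib_left del: sum.atMost_Suc)
      finally show ?thesis using pq IH1 IH2 by simp
    qed
  qed
qed

lemma term_id:
  "Tco gd (2*i+m) l i = fact l * fact (2*i+m) *
     (2 ^ (2*(l+i+m) - (2*l+2*i+m)) * (gd (l+i+m) 1 / fact (l+i+m)) * real ((l+i+m) choose ((2*l+2*i+m) - (l+i+m))) * real (((2*l+2*i+m) - (l+i+m)) choose l))"
proof -
  have e: "2*(l+i+m) - (2*l+2*i+m) = m" "(2*l+2*i+m) - (l+i+m) = l+i" "l + (2*i+m) - i = l+i+m" "2*i+m-2*i = m" by auto
  have b1: "real ((l+i+m) choose (l+i)) = fact (l+i+m) / (fact (l+i) * fact m)"
    using binomial_fact[of "l+i" "l+i+m"] by simp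
  have b2: "real ((l+i) choose l) = fact (l+i) / (fact l * fact i)"
    using binomial_fact[of l "l+i"] by simp
  have pos: "(fact (l+i+m) :: real) > 0" "(fact (l+i) :: real) > 0" "(fact l :: real) > 0" "(fact i :: real) > 0" "(fact m :: real) > 0" by auto
  show ?thesis unfolding e b1 b2 Tco_def using pos by (simp add: e field_simps)
qed

lemma inner_id:
  assumes "2*l \<le> k"
  shows "(\<Sum>i\<le>k - 2*l. Tco gd (k - 2*l) l i) = fact l * fact (k - 2*l) *
    (\<Sum>n = (k+1) div 2 .. k - l. 2 ^ (2*n - k) * (gd n 1 / fact n) * real (n choose (k - n)) * real ((k - n) choose l))"
proof -
  let ?z = "k - 2*l"
  have "(\<Sum>i\<le>?z. Tco gd ?z l i) = (\<Sum>i\<le>?z div 2. Tco gd ?z l i)"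
    by (rule sum.mono_neutral_right) (auto simp: Tco_def)
  also have "\<dots> = (\<Sum>n = (k+1) div 2 .. k - l. fact l * fact ?z * (2 ^ (2*n - k) * (gd n 1 / fact n) * real (n choose (k - n)) * real ((k - n) choose l)))"
  proof (rule sum.reindex_bij_witness[of _ "\<lambda>n. k - l - n" "\<lambda>i. k - l - i"])
    fix i assume i: "i \<in> {..?z div 2}"
    show "k - l - (k - l - i) = i" using i assms by auto
    show "k - l - i \<in> {(k+1) div 2 .. k - l}" using i assms by auto
    define n where "n = k - l - i"
    define m where "m = 2*n - k"
    have kk: "k = 2*l+2*i+m" "n = l+i+m" "?z = 2*i+m" using i assms unfolding m_def n_def by auto
    show "fact l * fact ?z * (2 ^ (2*(k-l-i) - k) * (gd (k-l-i) 1 / fact (k-l-i)) * real ((k-l-i) choose (k - (k-l-i))) * real ((k - (k-l-i)) choose l)) = Tco gd ?z l i"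
      unfolding n_def[symmetric] unfolding kk using term_id[where gd=gd and i=i and m=m and l=l] by simp
  next
    fix n assume n: "n \<in> {(k+1) div 2 .. k - l}"
    show "k - l - (k - l - n) = n" using n assms by auto
    show "k - l - n \<in> {..?z div 2}" using n assms by auto
  qed
  also have "\<dots> = fact l * fact ?z * (\<Sum>n = (k+1) div 2 .. k - l. 2 ^ (2*n - k) * (gd n 1 / fact n) * real (n choose (k - n)) * real ((k - n) choose l))"
    by (simp add: sum_distrib_left)
  finally show ?thesis .
qed



definition LS :: "'a set \<Rightarrow> nat \<Rightarrow> 'a list set" where
  "LS A k = {xs. set xs \<subseteq> A \<and> length xs = k}"

lemma finite_LS: "finite A \<Longrightarrow> finite (LS A k)"
  unfolding LS_def by (rule finite_lists_length_eq)

lemma sum_LS_Suc: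
  assumes "finite A"
  shows "(\<Sum>v\<in>LS A (Suc k). G v) = (\<Sum>v\<in>LS A k. \<Sum>i\<in>A. G (i # v))"
proof -
  have "LS A (Suc k) = (\<lambda>(xs, n). n#xs) ` (LS A k \<times> A)"
    unfolding LS_def by (rule lists_length_Suc_eq)
  moreover have "inj_on (\<lambda>(xs, n). n#xs) (LS A k \<times> A)"
    by (auto simp: inj_on_def)
  ultimately have "(\<Sum>v\<in>LS A (Suc k). G v) = (\<Sum>p\<in>LS A k \<times> A. G (snd p # fst p))"
    by (simp add: sum.reindex split_def)
  also have "\<dots> = (\<Sum>v\<in>LS A k. \<Sum>i\<in>A. G (i # v))"
    by (simp add: sum.cartesian_product split_def)
  finally show ?thesis .
qed

lemma LS_0: "LS A 0 = {[]}" by (auto simp: LS_def)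

lemma multi_idx_LS: "multi_idx N k = LS {..<N} k"
  by (auto simp: multi_idx_def LS_def)

lemma binom_sum_shift:
  fixes G :: "nat \<Rightarrow> real"
  shows "(\<Sum>j\<le>Suc k. real (Suc k choose j) * G j) = (\<Sum>j\<le>k. real (k choose j) * G j) + (\<Sum>j\<le>k. real (k choose j) * G (Suc j))"
proof -
  have "(\<Sum>j\<le>Suc k. real (Suc k choose j) * G j) = G 0 + (\<Sum>j\<le>k. real (Suc k choose Suc j) * G (Suc j))"
    by (subst sum.atMost_Suc_shift) simp
  also have "\<dots> = G 0 + (\<Sum>j\<le>k. real (k choose Suc j) * G (Suc j)) + (\<Sum>j\<le>k. real (k choose j) * G (Suc j))"
    by (simp add: sum.distrib algebra_simps)
  also have "G 0 + (\<Sum>j\<le>k. real (k choose Suc j) * G (Suc j)) = (\<Sum>j\<le>k. real (k choose j) * G j)"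
  proof (cases k)
    case 0 then show ?thesis by simp
  next
    case (Suc k')
    have "(\<Sum>j\<le>k. real (k choose j) * G j) = G 0 + (\<Sum>j\<le>k'. real (k choose Suc j) * G (Suc j))"
      unfolding Suc by (subst sum.atMost_Suc_shift) simp
    moreover have "(\<Sum>j\<le>k. real (k choose Suc j) * G (Suc j)) = (\<Sum>j\<le>k'. real (k choose Suc j) * G (Suc j))"
      using Suc by (simp del: binomial_Suc_Suc)
    ultimately show ?thesis by simp
  qed
  finally show ?thesis .
qed

lemma split_sum:
  fixes F :: "nat \<Rightarrow> nat list \<Rightarrow> real"
  assumes N: "0 < N"
  shows "(\<Sum>is\<in>LS {..<N} k. F (count_list is 0) (filter (\<lambda>i. i \<noteq> 0) is)) =
     (\<Sum>j\<le>k. real (k choose j) * (\<Sum>v\<in>LS {1..<N} j. F (k - j) v))"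
proof (induction k arbitrary: F)
  case 0
  then show ?case by (simp add: LS_0)
next
  case (Suc k)
  have split: "{..<N} = insert 0 {1..<N}" using N by auto
  have "(\<Sum>is\<in>LS {..<N} (Suc k). F (count_list is 0) (filter (\<lambda>i. i \<noteq> 0) is))
      = (\<Sum>is\<in>LS {..<N} k. \<Sum>i\<in>{..<N}. F (count_list (i # is) 0) (filter (\<lambda>i. i \<noteq> 0) (i # is)))"
    by (rule sum_LS_Suc) simp
  also have "\<dots> = (\<Sum>is\<in>LS {..<N} k. F (Suc (count_list is 0)) (filter (\<lambda>i. i \<noteq> 0) is)
       + (\<Sum>i\<in>{1..<N}. F (count_list is 0) (i # filter (\<lambda>i. i \<noteq> 0) is)))"
    apply (rule sum.cong[OF refl])
    apply (subst split)
    apply (subst sum.insert)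
      apply auto
    done
  also have "\<dots> = (\<Sum>j\<le>k. real (k choose j) * (\<Sum>v\<in>LS {1..<N} j. F (Suc (k - j)) v))
       + (\<Sum>j\<le>k. real (k choose j) * (\<Sum>v\<in>LS {1..<N} j. \<Sum>i\<in>{1..<N}. F (k - j) (i # v)))"
    using Suc.IH[of "\<lambda>z v. F (Suc z) v"] Suc.IH[of "\<lambda>z v. \<Sum>i\<in>{1..<N}. F z (i # v)"]
    by (simp add: sum.distrib)
  also have "\<dots> = (\<Sum>j\<le>k. real (k choose j) * (\<Sum>v\<in>LS {1..<N} j. F (Suc k - j) v))
       + (\<Sum>j\<le>k. real (k choose j) * (\<Sum>v\<in>LS {1..<N} (Suc j). F (Suc k - Suc j) v))"
    by (intro arg_cong2[where f="(+)"] sum.cong refl) (auto simp: sum_LS_Suc Suc_diff_le)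
  also have "\<dots> = (\<Sum>j\<le>Suc k. real (Suc k choose j) * (\<Sum>v\<in>LS {1..<N} j. F (Suc k - j) v))"
    by (rule binom_sum_shift[symmetric])
  finally show ?case .
qed



definition gdpow :: "real \<Rightarrow> nat \<Rightarrow> real \<Rightarrow> real" where
  "gdpow q n t = (\<Prod>i<n. (q - real i)) * t powr (q - real n)"

lemma gdfam_pow: "gdfam (gdpow q)"
proof
  fix n :: nat and t :: real assume t: "0 < t"
  have "((\<lambda>t. (\<Prod>i<n. (q - real i)) * t powr (q - real n)) has_real_derivative
      (\<Prod>i<n. (q - real i)) * ((q - real n) * t powr (q - real n - 1))) (at t)"
    by (rule DERIV_cmult, rule has_real_derivative_powr[OF t])
  moreover have "q - real (Suc n) = q - real n - 1" by simp
  ultimately show "(gdpow q n has_real_derivative gdpow q (Suc n) t) (at t)"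
    unfolding gdpow_def by (simp only: prod.lessThan_Suc mult_ac)
qed

lemma gdpow_1: "gdpow q n 1 / fact n = q gchoose n"
  by (simp add: gdpow_def gbinomial_prod_rev atLeast0LessThan)

definition gdln :: "nat \<Rightarrow> real \<Rightarrow> real" where
  "gdln n t = (if n = 0 then ln t / 2 else (-1) ^ (n - 1) * fact (n - 1) / 2 * t powr (- real n))"

lemma gdfam_ln: "gdfam gdln"
proof
  fix n :: nat and t :: real assume t: "0 < t"
  show "(gdln n has_real_derivative gdln (Suc n) t) (at t)"
  proof (cases n)
    case 0
    have "((\<lambda>t. ln t / 2) has_real_derivative inverse t / 2) (at t)"
      using t by (auto intro!: derivative_eq_intros simp: field_simps)
    moreover have "inverse t / 2 = gdln (Suc 0) t" using t by (simp add: gdln_def powr_minus)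
    ultimately show ?thesis using 0 by (simp add: gdln_def[abs_def])
  next
    case (Suc m)
    have "((\<lambda>t. (-1) ^ m * fact m / 2 * t powr (- real (Suc m))) has_real_derivative
       (-1) ^ m * fact m / 2 * (- real (Suc m) * t powr (- real (Suc m) - 1))) (at t)"
      by (rule DERIV_cmult, rule has_real_derivative_powr[OF t])
    moreover have "(-1) ^ m * fact m / 2 * (- real (Suc m) * t powr (- real (Suc m) - 1))
        = (-1) ^ Suc m * fact (Suc m) / 2 * t powr (- real (Suc (Suc m)))"
    proof -
      have e: "- real (Suc m) - 1 = - real (Suc (Suc m))" by simp
      have f: "(fact (Suc m) :: real) = real (Suc m) * fact m" by (simp add: fact_Suc del: of_nat_Suc)
      show ?thesis unfolding e f power_Suc by (simp only: mult_ac divide_inverse mult_minus_left mult_minus_right)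
    qed
    ultimately show ?thesis using Suc by (simp add: gdln_def[abs_def])
  qed
qed

lemma gdln_1: "1 \<le> n \<Longrightarrow> gdln n 1 / fact n = - ((-1) ^ n / (2 * real n))"
proof -
  assume n: "1 \<le> n"
  then obtain m where m: "n = Suc m" by (cases n) auto
  have f: "(fact (Suc m) :: real) = real (Suc m) * fact m" by (simp add: fact_Suc del: of_nat_Suc)
  have p: "real (Suc m) > 0" "(fact m :: real) > 0" by auto
  have "gdln n 1 / fact n = (-1) ^ m * fact m / 2 / fact (Suc m)" by (simp add: gdln_def m)
  also have "\<dots> = (-1) ^ m / (2 * real (Suc m))" unfolding f using p
    by (simp only: divide_inverse inverse_mult_distrib mult_ac) (simp add: p(2)[THEN less_imp_neq, symmetric])
  also have "\<dots> = - ((-1) ^ n / (2 * real n))" by (simp add: m)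
  finally show ?thesis .
qed

lemma iter_pdiff_shift: "iter_pdiff (map Suc is) (\<lambda>x. f (x \<circ> Suc)) y = iter_pdiff is f (y \<circ> Suc)"
proof (induction "is" arbitrary: y)
  case Nil then show ?case by simp
next
  case (Cons i "is")
  have e: "(y(Suc i := v)) \<circ> Suc = (y \<circ> Suc)(i := v)" for v by (rule ext) simp
  show ?case by (simp only: iter_pdiff.simps list.map pdiff_def Cons.IH e) (simp add: o_def)
qed

lemma cont_rho_line: "continuous (at 0) (\<lambda>t. rho N ((x::nat\<Rightarrow>real)(j := x j + t)))"
  unfolding rho_def
  apply (intro continuous_intros)
  apply (case_tac "i = j")
   apply (auto intro!: continuous_intros)
  done

lemma ev_pos_line:
  fixes x :: "nat \<Rightarrow> real" and F :: "(nat \<Rightarrow> real) \<Rightarrow> real"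
  assumes "continuous (at 0) (\<lambda>t. F (x(j := x j + t)))" "0 < F x"
  shows "eventually (\<lambda>t. 0 < F (x(j := x j + t))) (nhds 0)"
proof -
  have "((\<lambda>t. F (x(j := x j + t))) \<longlongrightarrow> F x) (at 0)"
  proof -
    have e: "x(j := x j + 0) = x" by simp
    have "((\<lambda>t. F (x(j := x j + t))) \<longlongrightarrow> F (x(j := x j + 0))) (at 0)"
      using assms(1) unfolding continuous_at .
    then show ?thesis by (simp only: e)
  qed
  then have "eventually (\<lambda>t. 0 < F (x(j := x j + t))) (at 0)"
    using assms(2) by (rule order_tendstoD(1))
  then show ?thesis using assms(2) by (simp add: eventually_nhds_conv_at)
qed



lemma enorm_e1: "0 < M \<Longrightarrow> enorm M e1 = 1"
proof -
  assume M: "0 < M"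
  have "(\<Sum>i<M. (e1 i)\<^sup>2) = (\<Sum>i\<in>{0}. (e1 i)\<^sup>2)"
    by (rule sum.mono_neutral_right) (auto simp: M e1_def)
  then show ?thesis by (simp add: enorm_def e1_def)
qed

lemma sum_list_zero: "(\<And>x. x \<in> set xs \<Longrightarrow> f x = 0) \<Longrightarrow> sum_list (map f xs) = (0::real)"
  by (induction xs) auto

lemma W_odd: "0 \<notin> set v \<Longrightarrow> odd (length v) \<Longrightarrow> W v = 0"
  unfolding W_def
proof (rule sum_list_zero)
  fix t assume v: "0 \<notin> set v" "odd (length v)" and t: "t \<in> set (S v)"
  obtain w U p c where tt: "t = (w,U,p,c)" by (cases t) auto
  have eq: "2 * c = length v + length U" using S_inv[of v w U p c] v t tt by auto
  have "U \<noteq> []"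
  proof
    assume "U = []"
    then have "length v = 2 * c" using eq by simp
    then show False using v(2) by simp
  qed
  then show "(if fst (snd t) = [] then fst t else 0) = 0" using tt by auto
qed

lemma Hpoly_dr: "(Hpoly l p c a has_real_derivative Hpoly l p (Suc c) a r) (at r)"
proof (cases "p = 0 \<and> c < l")
  case True
  then obtain d where d: "l - c = Suc d" "l - Suc c = d" by (metis Suc_diff_Suc)
  have "((\<lambda>r. fact l / fact (Suc d) * r ^ Suc d) has_real_derivative fact l / fact (Suc d) * (real (Suc d) * r ^ (Suc d - Suc 0))) (at r)"
    by (rule DERIV_cmult, rule DERIV_pow)
  moreover have "fact l / fact (Suc d) * (real (Suc d) * r ^ (Suc d - Suc 0)) = fact l / fact d * r ^ d"
  proof -
    have f: "(fact (Suc d) :: real) = real (Suc d) * fact d" by (simp add: fact_Suc del: of_nat_Suc)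
    have p: "real (Suc d) > 0" "(fact d :: real) > 0" by auto
    show ?thesis unfolding f using p by (simp del: of_nat_Suc)
  qed
  ultimately show ?thesis using True d by (simp add: Hpoly_def[abs_def])
next
  case False
  then have "Hpoly l p c a = (\<lambda>r. if p = 0 \<and> c = l then fact l else 0)" "Hpoly l p (Suc c) a r = 0"
    by (auto simp: Hpoly_def[abs_def])
  then show ?thesis by simp
qed

lemma Hpoly_da: "((\<lambda>a. Hpoly l p c a r) has_real_derivative Hpoly l (Suc p) c a r) (at a)"
  by (simp add: Hpoly_def)

lemma LS_shift: "map Suc ` LS {..<M} k = LS {1..<Suc M} k"
proof
  show "map Suc ` LS {..<M} k \<subseteq> LS {1..<Suc M} k" by (auto simp: LS_def)
  show "LS {1..<Suc M} k \<subseteq> map Suc ` LS {..<M} k"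
  proof
    fix v assume v: "v \<in> LS {1..<Suc M} k"
    have "map Suc (map (\<lambda>i. i - 1) v) = v"
      unfolding map_map o_def by (rule map_idI) (use v in \<open>auto simp: LS_def\<close>)
    then have "v = map Suc (map (\<lambda>i. i - 1) v)" by simp
    moreover have "map (\<lambda>i. i - 1) v \<in> LS {..<M} k" using v by (force simp: LS_def)
    ultimately show "v \<in> map Suc ` LS {..<M} k" by blast
  qed
qed

lemma gamma_lower:
  assumes N: "2 \<le> N"
  shows "gamma (N-1) (real (2*l)) (2*l) = (\<Sum>v\<in>LS {1..<N} (2*l). (W v * fact l)\<^sup>2)"
proof -
  define f where "f = (\<lambda>x. enorm (N-1) x powr real (2*l))"
  define y :: "nat \<Rightarrow> real" where "y = (\<lambda>i. if i = 1 then 1 else 0)"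
  have ye: "y \<circ> Suc = e1" by (rule ext) (simp add: y_def e1_def)
  have y0: "y 0 = 0" by (simp add: y_def)
  have yr: "rho N y = 1"
  proof -
    have "(\<Sum>i\<in>{1..<N}. (y i)\<^sup>2) = (\<Sum>i\<in>{1}. (y i)\<^sup>2)"
      by (rule sum.mono_neutral_right) (use N in \<open>auto simp: y_def\<close>)
    then show ?thesis by (simp add: rho_def y_def)
  qed
  have Nm: "N = Suc (N - 1)" using N by simp
  let ?u = "\<lambda>x. f (x \<circ> Suc)"
  have base: "?u x = Hpoly l 0 0 (x 0) (rho N x)" if x: "x \<in> {x. 0 < rho N x}" for x
  proof -
    have "rho N x = (\<Sum>i<N-1. (x (Suc i))\<^sup>2)"
    proof -
      have "{1..<N} = {Suc 0..<Suc (N-1)}" using N by auto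
      then show ?thesis unfolding rho_def by (simp only: sum.shift_bounds_Suc_ivl atLeast0LessThan)
    qed
    then have en: "enorm (N-1) (x \<circ> Suc) = sqrt (rho N x)" by (simp add: enorm_def)
    have "sqrt (rho N x) powr real (2*l) = sqrt (rho N x) ^ (2*l)" by (rule powr_realpow) (use x in auto)
    also have "\<dots> = rho N x ^ l" using x by (simp add: power_mult)
    finally show ?thesis using en by (simp add: f_def Hpoly_def)
  qed
  have vals: "iter_pdiff v ?u y = W v * fact l" if v: "v \<in> LS {1..<N} (2*l)" for v
  proof -
    have "iter_pdiff v ?u y = sum_list (map (\<lambda>t. val N (Hpoly l) t y) (S v))"
    proof (rule iter_pdiff_S[where Dom = "{x. 0 < rho N x}"])
      show "eventually (\<lambda>t. x(j := x j + t) \<in> {x. 0 < rho N x}) (nhds 0)" if "x \<in> {x. 0 < rho N x}" for x j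
        using ev_pos_line[where F="rho N", OF cont_rho_line, of x j] that by simp
      show "set v \<subseteq> {..<N}" using v by (auto simp: LS_def)
      show "y \<in> {x. 0 < rho N x}" using yr by simp
    qed (auto simp: Hpoly_dr Hpoly_da base)
    also have "\<dots> = W v * fact l"
      by (rule sum_val_poly) (use v y0 yr in \<open>auto simp: LS_def\<close>)
    finally show ?thesis .
  qed
  have "gamma (N-1) (real (2*l)) (2*l) = (\<Sum>is\<in>multi_idx (N-1) (2*l). (iter_pdiff is f e1)\<^sup>2)"
    using N by (simp add: gamma_def enorm_e1 grad_norm_def f_def sum_nonneg)
  also have "\<dots> = (\<Sum>is\<in>LS {..<N-1} (2*l). (iter_pdiff (map Suc is) ?u y)\<^sup>2)"
    by (simp add: multi_idx_LS iter_pdiff_shift ye)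
  also have "\<dots> = (\<Sum>v\<in>map Suc ` LS {..<N-1} (2*l). (iter_pdiff v ?u y)\<^sup>2)"
    by (rule sum.reindex[symmetric, unfolded o_def]) (simp add: inj_on_def)
  also have "\<dots> = (\<Sum>v\<in>LS {1..<N} (2*l). (iter_pdiff v ?u y)\<^sup>2)"
    using LS_shift[of "N-1" "2*l"] Nm by simp
  also have "\<dots> = (\<Sum>v\<in>LS {1..<N} (2*l). (W v * fact l)\<^sup>2)"
    by (rule sum.cong) (auto simp: vals)
  finally show ?thesis .
qed



lemma sum_even:
  fixes X :: "nat \<Rightarrow> real"
  assumes "\<And>j. odd j \<Longrightarrow> X j = 0"
  shows "(\<Sum>j\<le>k. X j) = (\<Sum>l=0..k div 2. X (2*l))"
proof -
  have "(\<Sum>l=0..k div 2. X (2*l)) = (\<Sum>j\<in>(\<lambda>l. 2*l) ` {0..k div 2}. X j)"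
    by (rule sum.reindex[symmetric, unfolded o_def]) (simp add: inj_on_def)
  also have "\<dots> = (\<Sum>j\<le>k. X j)"
  proof (rule sum.mono_neutral_left)
    show "(\<lambda>l. 2*l) ` {0..k div 2} \<subseteq> {..k}" by auto
    show "\<forall>j\<in>{..k} - (\<lambda>l. 2*l) ` {0..k div 2}. X j = 0"
    proof
      fix j assume j: "j \<in> {..k} - (\<lambda>l. 2*l) ` {0..k div 2}"
      have "odd j"
      proof
        assume "even j"
        then obtain l where "j = 2*l" by blast
        with j show False by auto
      qed
      then show "X j = 0" by (rule assms)
    qed
  qed simp
  finally show ?thesis by simp
qed

lemma cont_line0: "continuous (at 0) (\<lambda>t. ((x::nat\<Rightarrow>real)(j := x j + t)) 0)"
  by (cases "j = 0") (auto intro!: continuous_intros)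

lemma main_gen:
  assumes N: "2 \<le> N" and g: "gdfam gd"
    and base: "\<And>x. 0 < (x 0)\<^sup>2 + rho N x \<Longrightarrow> u x = gd 0 ((x 0)\<^sup>2 + rho N x)"
  shows "(\<Sum>is\<in>multi_idx N k. (iter_pdiff is u e1)\<^sup>2) = fact k * (\<Sum>l = 0..k div 2.
     fact (k - 2*l) / fact (2*l) *
     (\<Sum>n = (k+1) div 2 .. k - l. 2 ^ (2*n - k) * (gd n 1 / fact n) * real (n choose (k - n)) * real ((k - n) choose l))\<^sup>2
     * gamma (N - 1) (real (2*l)) (2*l))"
proof -
  define Dom where "Dom = {x::nat\<Rightarrow>real. 0 < (x 0)\<^sup>2 + rho N x}"
  have ip: "iter_pdiff is u e1 = W (filter (\<lambda>i. i \<noteq> 0) is) * Hg gd (count_list is 0) (length (filter (\<lambda>i. i \<noteq> 0) is) div 2) 1 0"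
    if isk: "is \<in> multi_idx N k" for "is"
  proof -
    have "iter_pdiff is u e1 = sum_list (map (\<lambda>t. val N (Hg gd) t e1) (S is))"
    proof (rule iter_pdiff_S[where Dom = Dom])
      show "eventually (\<lambda>t. x(j := x j + t) \<in> Dom) (nhds 0)" if "x \<in> Dom" for x j
      proof -
        have "continuous (at 0) (\<lambda>t. ((x(j := x j + t)) 0)\<^sup>2 + rho N (x(j := x j + t)))"
          by (intro continuous_intros cont_line0 cont_rho_line)
        from ev_pos_line[where F = "\<lambda>x. (x 0)\<^sup>2 + rho N x", OF this] that show ?thesis
          by (simp add: Dom_def)
      qed
      show "(Hg gd p c (x 0) has_real_derivative Hg gd p (Suc c) (x 0) (rho N x)) (at (rho N x))" if "x \<in> Dom" for x p c
        using gdfam.Hg_dr[OF g] that by (simp add: Dom_def)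
      show "((\<lambda>a. Hg gd p c a (rho N x)) has_real_derivative Hg gd (Suc p) c (x 0) (rho N x)) (at (x 0))" if "x \<in> Dom" for x p c
        using gdfam.Hg_da[OF g] that by (simp add: Dom_def)
      show "u x = Hg gd 0 0 (x 0) (rho N x)" if "x \<in> Dom" for x
        using base that by (simp add: Dom_def)
      show "set is \<subseteq> {..<N}" using isk by (simp add: multi_idx_def)
      show "e1 \<in> Dom" unfolding Dom_def by (simp add: rho_e1) (simp add: e1_def)
    qed
    then show ?thesis by (simp add: sum_val_e1)
  qed
  define inner where "inner l = (\<Sum>n = (k+1) div 2 .. k - l. 2 ^ (2*n - k) * (gd n 1 / fact n) * real (n choose (k - n)) * real ((k - n) choose l))" for l
  define X where "X j = real (k choose j) * (\<Sum>v\<in>LS {1..<N} j. (W v * Hg gd (k - j) (j div 2) 1 0)\<^sup>2)" for j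
  have "(\<Sum>is\<in>multi_idx N k. (iter_pdiff is u e1)\<^sup>2)
      = (\<Sum>is\<in>LS {..<N} k. (\<lambda>z v. (W v * Hg gd z (length v div 2) 1 0)\<^sup>2) (count_list is 0) (filter (\<lambda>i. i \<noteq> 0) is))"
    by (rule sum.cong) (auto simp: ip multi_idx_LS[symmetric])
  also have "\<dots> = (\<Sum>j\<le>k. real (k choose j) * (\<Sum>v\<in>LS {1..<N} j. (W v * Hg gd (k - j) (length v div 2) 1 0)\<^sup>2))"
    by (rule split_sum) (use N in auto)
  also have "\<dots> = (\<Sum>j\<le>k. X j)"
    unfolding X_def by (intro sum.cong refl arg_cong2[where f="(*)"]) (auto simp: LS_def)
  also have "\<dots> = (\<Sum>l=0..k div 2. X (2*l))"
  proof (rule sum_even)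
    fix j :: nat assume j: "odd j"
    have "W v = 0" if "v \<in> LS {1..<N} j" for v
      by (rule W_odd) (use that j in \<open>auto simp: LS_def\<close>)
    then show "X j = 0" by (simp add: X_def)
  qed
  also have "\<dots> = (\<Sum>l=0..k div 2. fact k * (fact (k - 2*l) / fact (2*l) * (inner l)\<^sup>2 * gamma (N - 1) (real (2*l)) (2*l)))"
  proof (rule sum.cong[OF refl])
    fix l assume l: "l \<in> {0..k div 2}"
    then have lk: "2*l \<le> k" by auto
    have H: "Hg gd (k - 2*l) l 1 0 = fact l * fact (k - 2*l) * inner l"
      unfolding Hg_explicit inner_def by (rule inner_id[OF lk])
    have gam: "gamma (N - 1) (real (2*l)) (2*l) = (fact l)\<^sup>2 * (\<Sum>v\<in>LS {1..<N} (2*l). (W v)\<^sup>2)"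
      using gamma_lower[OF N, of l] by (simp add: power_mult_distrib sum_distrib_left mult.commute)
    have C: "real (k choose (2*l)) = fact k / (fact (2*l) * fact (k - 2*l))"
      by (rule binomial_fact[OF lk])
    have "X (2*l) = real (k choose (2*l)) * (Hg gd (k - 2*l) l 1 0)\<^sup>2 * (\<Sum>v\<in>LS {1..<N} (2*l). (W v)\<^sup>2)"
      by (simp add: X_def power_mult_distrib sum_distrib_left sum_distrib_right mult_ac)
    also have "\<dots> = fact k / (fact (2*l) * fact (k - 2*l)) * (fact (k - 2*l))\<^sup>2 * (inner l)\<^sup>2 * ((fact l)\<^sup>2 * (\<Sum>v\<in>LS {1..<N} (2*l). (W v)\<^sup>2))"
      unfolding H C by (simp add: power_mult_distrib mult_ac)
    also have "\<dots> = fact k * (fact (k - 2*l) / fact (2*l) * (inner l)\<^sup>2 * gamma (N - 1) (real (2*l)) (2*l))"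
      unfolding gam by (simp add: power2_eq_square field_simps)
    finally show "X (2*l) = fact k * (fact (k - 2*l) / fact (2*l) * (inner l)\<^sup>2 * gamma (N - 1) (real (2*l)) (2*l))" .
  qed
  also have "\<dots> = fact k * (\<Sum>l = 0..k div 2. fact (k - 2*l) / fact (2*l) * (inner l)\<^sup>2 * gamma (N - 1) (real (2*l)) (2*l))"
    by (simp add: sum_distrib_left)
  finally show ?thesis unfolding inner_def .
qed



lemma enorm_split: "0 < N \<Longrightarrow> enorm N x = sqrt ((x 0)\<^sup>2 + rho N x)"
proof -
  assume N: "0 < N"
  have "(\<Sum>i<N. (x i)\<^sup>2) = (x 0)\<^sup>2 + (\<Sum>i\<in>{1..<N}. (x i)\<^sup>2)"
    using N by (simp add: lessThan_atLeast0 sum.atLeast_Suc_lessThan)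
  then show ?thesis by (simp add: enorm_def rho_def)
qed

lemma gamma_sum: "0 < N \<Longrightarrow> gamma N s k = (\<Sum>is\<in>multi_idx N k. (iter_pdiff is (\<lambda>x. enorm N x powr s) e1)\<^sup>2)"
  by (simp add: gamma_def enorm_e1 grad_norm_def sum_nonneg)

lemma ell_sum: "0 < N \<Longrightarrow> ell N k = (\<Sum>is\<in>multi_idx N k. (iter_pdiff is (\<lambda>x. ln (enorm N x)) e1)\<^sup>2)"
  by (simp add: ell_def enorm_e1 grad_norm_def sum_nonneg)

lemma part1:
  assumes N: "2 \<le> N"
  shows "gamma N s k =
             fact k * (\<Sum>l = 0..k div 2.
               fact (k - 2*l) / fact (2*l) *
               (\<Sum>n = (k+1) div 2 .. k - l.
                  2 ^ (2*n - k) * ((s/2) gchoose n) * real (n choose (k - n)) * real ((k - n) choose l))\<^sup>2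
               * gamma (N - 1) (real (2*l)) (2*l))"
proof -
  have "gamma N s k = (\<Sum>is\<in>multi_idx N k. (iter_pdiff is (\<lambda>x. enorm N x powr s) e1)\<^sup>2)"
    using N by (simp add: gamma_sum)
  also have "\<dots> = fact k * (\<Sum>l = 0..k div 2.
     fact (k - 2*l) / fact (2*l) *
     (\<Sum>n = (k+1) div 2 .. k - l. 2 ^ (2*n - k) * (gdpow (s/2) n 1 / fact n) * real (n choose (k - n)) * real ((k - n) choose l))\<^sup>2
     * gamma (N - 1) (real (2*l)) (2*l))"
  proof (rule main_gen[OF N gdfam_pow])
    fix x :: "nat \<Rightarrow> real" assume x: "0 < (x 0)\<^sup>2 + rho N x"
    have "enorm N x powr s = sqrt ((x 0)\<^sup>2 + rho N x) powr s" using N by (simp add: enorm_split)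
    also have "\<dots> = ((x 0)\<^sup>2 + rho N x) powr (s/2)"
      using x by (simp add: powr_half_sqrt[symmetric] powr_powr)
    finally show "enorm N x powr s = gdpow (s/2) 0 ((x 0)\<^sup>2 + rho N x)" by (simp add: gdpow_def)
  qed
  finally show ?thesis by (simp add: gdpow_1 mult.assoc)
qed

lemma part2:
  assumes N: "2 \<le> N"
  shows "gamma N (real (2*m)) (2*m) =
             fact (2*m) * (\<Sum>l = 0..m.
               fact (2*(m - l)) / fact (2*l) * (real (m choose l))\<^sup>2
               * gamma (N - 1) (real (2*l)) (2*l))"
proof -
  have d: "(2*m+1) div 2 = m" "2*m div 2 = m" by auto
  have inner: "(\<Sum>n = m .. 2*m - l. 2 ^ (2*n - 2*m) * (real m gchoose n) * real (n choose (2*m - n)) * real ((2*m - n) choose l))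
      = real (m choose l)" if l: "l \<le> m" for l
  proof -
    have "(\<Sum>n = m .. 2*m - l. 2 ^ (2*n - 2*m) * (real m gchoose n) * real (n choose (2*m - n)) * real ((2*m - n) choose l))
       = (\<Sum>n = m .. 2*m - l. if n = m then real (m choose l) else 0)"
    proof (rule sum.cong[OF refl])
      fix n assume n: "n \<in> {m..2*m-l}"
      have g: "(real (2*m)/2) gchoose n = real (m choose n)" by (simp add: binomial_gbinomial)
      show "2 ^ (2*n - 2*m) * (real m gchoose n) * real (n choose (2*m - n)) * real ((2*m - n) choose l)
          = (if n = m then real (m choose l) else 0)"
        using n by (auto simp: g binomial_gbinomial[symmetric])
    qed
    also have "\<dots> = real (m choose l)" using l by simp
    finally show ?thesis .
  qed
  have "gamma N (real (2*m)) (2*m) = fact (2*m) * (\<Sum>l = 0..m.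
               fact (2*m - 2*l) / fact (2*l) *
               (\<Sum>n = m .. 2*m - l.
                  2 ^ (2*n - 2*m) * ((real (2*m)/2) gchoose n) * real (n choose (2*m - n)) * real ((2*m - n) choose l))\<^sup>2
               * gamma (N - 1) (real (2*l)) (2*l))"
    using part1[OF N, of "real (2*m)" "2*m"] unfolding d .
  also have "\<dots> = fact (2*m) * (\<Sum>l = 0..m.
               fact (2*(m - l)) / fact (2*l) * (real (m choose l))\<^sup>2
               * gamma (N - 1) (real (2*l)) (2*l))"
    by (intro arg_cong2[where f="(*)"] refl sum.cong) (auto simp: inner right_diff_distrib')
  finally show ?thesis .
qed

lemma part3:
  assumes N: "2 \<le> N" and k: "k \<ge> 1"
  shows "ell N k =
             fact k * (\<Sum>l = 0..k div 2.
               fact (k - 2*l) / fact (2*l) *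
               (\<Sum>n = (k+1) div 2 .. k - l.
                  2 ^ (2*n - k) * ((-1) ^ n / (2 * real n)) * real (n choose (k - n)) * real ((k - n) choose l))\<^sup>2
               * gamma (N - 1) (real (2*l)) (2*l))"
proof -
  have "ell N k = (\<Sum>is\<in>multi_idx N k. (iter_pdiff is (\<lambda>x. ln (enorm N x)) e1)\<^sup>2)"
    using N by (simp add: ell_sum)
  also have "\<dots> = fact k * (\<Sum>l = 0..k div 2.
     fact (k - 2*l) / fact (2*l) *
     (\<Sum>n = (k+1) div 2 .. k - l. 2 ^ (2*n - k) * (gdln n 1 / fact n) * real (n choose (k - n)) * real ((k - n) choose l))\<^sup>2
     * gamma (N - 1) (real (2*l)) (2*l))"
  proof (rule main_gen[OF N gdfam_ln])
    fix x :: "nat \<Rightarrow> real" assume x: "0 < (x 0)\<^sup>2 + rho N x"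
    show "ln (enorm N x) = gdln 0 ((x 0)\<^sup>2 + rho N x)"
      using N x by (simp add: enorm_split ln_sqrt gdln_def)
  qed
  also have "\<dots> = fact k * (\<Sum>l = 0..k div 2.
               fact (k - 2*l) / fact (2*l) *
               (\<Sum>n = (k+1) div 2 .. k - l.
                  2 ^ (2*n - k) * ((-1) ^ n / (2 * real n)) * real (n choose (k - n)) * real ((k - n) choose l))\<^sup>2
               * gamma (N - 1) (real (2*l)) (2*l))"
  proof (rule arg_cong2[where f="(*)"], rule refl, rule sum.cong[OF refl])
    fix l assume l: "l \<in> {0..k div 2}"
    have "(\<Sum>n = (k+1) div 2 .. k - l. 2 ^ (2*n - k) * (gdln n 1 / fact n) * real (n choose (k - n)) * real ((k - n) choose l))
        = - (\<Sum>n = (k+1) div 2 .. k - l. 2 ^ (2*n - k) * ((-1) ^ n / (2 * real n)) * real (n choose (k - n)) * real ((k - n) choose l))"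
      unfolding sum_negf[symmetric]
    proof (rule sum.cong[OF refl])
      fix n assume n: "n \<in> {(k+1) div 2 .. k - l}"
      then have "1 \<le> n" using k by auto
      then show "2 ^ (2*n - k) * (gdln n 1 / fact n) * real (n choose (k - n)) * real ((k - n) choose l)
          = - (2 ^ (2*n - k) * ((-1) ^ n / (2 * real n)) * real (n choose (k - n)) * real ((k - n) choose l))"
        by (simp add: gdln_1)
    qed
    then show "fact (k - 2*l) / fact (2*l) *
     (\<Sum>n = (k+1) div 2 .. k - l. 2 ^ (2*n - k) * (gdln n 1 / fact n) * real (n choose (k - n)) * real ((k - n) choose l))\<^sup>2
     * gamma (N - 1) (real (2*l)) (2*l) = fact (k - 2*l) / fact (2*l) *
               (\<Sum>n = (k+1) div 2 .. k - l.
                  2 ^ (2*n - k) * ((-1) ^ n / (2 * real n)) * real (n choose (k - n)) * real ((k - n) choose l))\<^sup>2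
               * gamma (N - 1) (real (2*l)) (2*l)"
      by simp
  qed
  finally show ?thesis .
qed

theorem lemma3p2:
  fixes N :: nat
  assumes "N \<ge> 2"
  shows "(\<forall>(k::nat) (s::real).
           gamma N s k =
             fact k * (\<Sum>l = 0..k div 2.
               fact (k - 2*l) / fact (2*l) *
               (\<Sum>n = (k+1) div 2 .. k - l.
                  2 ^ (2*n - k) * ((s/2) gchoose n) * real (n choose (k - n)) * real ((k - n) choose l))\<^sup>2
               * gamma (N - 1) (real (2*l)) (2*l)))
       \<and> (\<forall>m::nat.
           gamma N (real (2*m)) (2*m) =
             fact (2*m) * (\<Sum>l = 0..m.
               fact (2*(m - l)) / fact (2*l) * (real (m choose l))\<^sup>2
               * gamma (N - 1) (real (2*l)) (2*l)))
       \<and> (\<forall>k::nat. k \<ge> 1 \<longrightarrow>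
           ell N k =
             fact k * (\<Sum>l = 0..k div 2.
               fact (k - 2*l) / fact (2*l) *
               (\<Sum>n = (k+1) div 2 .. k - l.
                  2 ^ (2*n - k) * ((-1) ^ n / (2 * real n)) * real (n choose (k - n)) * real ((k - n) choose l))\<^sup>2
               * gamma (N - 1) (real (2*l)) (2*l)))"
  using part1[OF assms] part2[OF assms] part3[OF assms] by blast


end
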